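(* The set $P=\bigsqcup_{n\ge1}P_n$, equipped with the operations $\dashv,\vdash,\perp$ described in the context, is an associative trioid, and it is the free associative trioid on the one generator $\{0\}\in P_1$. Precisely, let $\mathcal T$ be the free associative trioid on one generator $x$. Then the unique trioid morphism $\phi:\mathcal T\to P$ with $\phi(x)=\{0\}$ is a bijection, and it maps the elements of $\mathcal T$ that are products of $n$ copies of $x$ onto $P_n$.
   Context: An associative trioid is a set $X$ equipped with three binary operations $\dashv,\vdash,\perp:X\times X\to X$ satisfying for all $x,y,z\in X$ the following 11 relations: (1) $(x\dashv y)\dashv z=x\dashv(y\dashv z)$; (2) $(x\dashv y)\dashv z=x\dashv(y\vdash z)$; (3) $(x\vdash y)\dashv z=x\vdash(y\dashv z)$; (4) $(x\dashv y)\vdash z=x\vdash(y\vdash z)$; (5) $(x\vdash y)\vdash z=x\vdash(y\vdash z)$; (6) $(x\dashv y)\dashv z=x\dashv(y\perp z)$; (7) $(x\perp y)\dashv z=x\perp(y\dashv z)$; (8) $(x\dashv y)\perp z=x\perp(y\vdash z)$; (9) $(x\vdash y)\perp z=x\vdash(y\perp z)$; (10) $(x\perp y)\vdash z=x\vdash(y\vdash z)$; (11) $(x\perp y)\perp z=x\perp(y\perp z)$. A morphism of trioids is a map preserving all three operations. For $n\ge1$ let $[n-1]=\{0,\dots,n-1\}$ and let $P_n$ be the set of nonempty subsets of $[n-1]$. For $p,q\ge1$ let $\mathrm{bij}:[p-1]\sqcup[q-1]\to[p+q-1]$ be the identity on the first copy and $k\mapsto p+k$ on the second copy. For $X\in P_p$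 and $Y\in P_q$ set, in $P_{p+q}$: - $X\dashv Y=\mathrm{bij}(X)$ (with $X$ in the first copy); - $X\vdash Y=\mathrm{bij}(Y)$ (with $Y$ in the second copy); - $X\perp Y=\mathrm{bij}(X\sqcup Y)$. *)

theory Defs
  imports Main
begin

definition is_trioid ::
  "'a set \<Rightarrow> ('a \<Rightarrow> 'a \<Rightarrow> 'a) \<Rightarrow> ('a \<Rightarrow> 'a \<Rightarrow> 'a) \<Rightarrow> ('a \<Rightarrow> 'a \<Rightarrow> 'a) \<Rightarrow> bool" where
  "is_trioid A l r m \<longleftrightarrow>
     (\<forall>x\<in>A. \<forall>y\<in>A. l x y \<in> A \<and> r x y \<in> A \<and> m x y \<in> A) \<and>
     (\<forall>x\<in>A. \<forall>y\<in>A. \<forall>z\<in>A.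
        l (l x y) z = l x (l y z) \<and>
        l (l x y) z = l x (r y z) \<and>
        l (r x y) z = r x (l y z) \<and>
        r (l x y) z = r x (r y z) \<and>
        r (r x y) z = r x (r y z) \<and>
        l (l x y) z = l x (m y z) \<and>
        l (m x y) z = m x (l y z) \<and>
        m (l x y) z = m x (r y z) \<and>
        m (r x y) z = r x (m y z) \<and>
        r (m x y) z = r x (r y z) \<and>
        m (m x y) z = m x (m y z))"

text \<open>Terms built from the generator x with the three operations
  (TL = dashv, TR = vdash, TM = perp).\<close>
datatype tterm = Gen | TL tterm tterm | TR tterm tterm | TM tterm tterm

fun tlen :: "tterm \<Rightarrow> nat" where
  "tlen Gen = 1"
| "tlen (TL s t) = tlen s + tlen t"
| "tlen (TR s t) = tlen s + tlen t"
| "tlen (TM s t) = tlen s + tlen t"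

text \<open>The congruence generated by the 11 trioid relations; the free trioid
  on one generator is the quotient of tterm by tcong.\<close>
inductive tcong :: "tterm \<Rightarrow> tterm \<Rightarrow> bool" where
  refl: "tcong t t"
| sym: "tcong s t \<Longrightarrow> tcong t s"
| trans: "tcong s t \<Longrightarrow> tcong t u \<Longrightarrow> tcong s u"
| congL: "tcong s s' \<Longrightarrow> tcong t t' \<Longrightarrow> tcong (TL s t) (TL s' t')"
| congR: "tcong s s' \<Longrightarrow> tcong t t' \<Longrightarrow> tcong (TR s t) (TR s' t')"
| congM: "tcong s s' \<Longrightarrow> tcong t t' \<Longrightarrow> tcong (TM s t) (TM s' t')"
| ax1: "tcong (TL (TL x y) z) (TL x (TL y z))"
| ax2: "tcong (TL (TL x y) z) (TL x (TR y z))"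
| ax3: "tcong (TL (TR x y) z) (TR x (TL y z))"
| ax4: "tcong (TR (TL x y) z) (TR x (TR y z))"
| ax5: "tcong (TR (TR x y) z) (TR x (TR y z))"
| ax6: "tcong (TL (TL x y) z) (TL x (TM y z))"
| ax7: "tcong (TL (TM x y) z) (TM x (TL y z))"
| ax8: "tcong (TM (TL x y) z) (TM x (TR y z))"
| ax9: "tcong (TM (TR x y) z) (TR x (TM y z))"
| ax10: "tcong (TR (TM x y) z) (TR x (TR y z))"
| ax11: "tcong (TM (TM x y) z) (TM x (TM y z))"

text \<open>An element of P_n is encoded as the pair (n, S) with S a nonempty subset
  of {0..<n} = [n-1].\<close>
definition Pn :: "nat \<Rightarrow> (nat \<times> nat set) set" where
  "Pn n = {(n, S) | S. S \<noteq> {} \<and> S \<subseteq> {0..<n}}"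

definition Pset :: "(nat \<times> nat set) set" where
  "Pset = (\<Union>n\<in>{1..}. Pn n)"

definition pL :: "nat \<times> nat set \<Rightarrow> nat \<times> nat set \<Rightarrow> nat \<times> nat set" where
  "pL a b = (fst a + fst b, snd a)"

definition pR :: "nat \<times> nat set \<Rightarrow> nat \<times> nat set \<Rightarrow> nat \<times> nat set" where
  "pR a b = (fst a + fst b, (\<lambda>k. fst a + k) ` snd b)"

definition pM :: "nat \<times> nat set \<Rightarrow> nat \<times> nat set \<Rightarrow> nat \<times> nat set" where
  "pM a b = (fst a + fst b, snd a \<union> (\<lambda>k. fst a + k) ` snd b)"

fun peval :: "tterm \<Rightarrow> nat \<times> nat set" where
  "peval Gen = (1, {0})"
| "peval (TL s t) = pL (peval s) (peval t)"
| "peval (TR s t) = pR (peval s) (peval t)"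
| "peval (TM s t) = pM (peval s) (peval t)"

end

theory Submission
  imports Defs
begin

datatype op3 = OL | OR | OM

fun top :: "op3 \<Rightarrow> tterm \<Rightarrow> tterm \<Rightarrow> tterm" where
  "top OL = TL" | "top OR = TR" | "top OM = TM"

fun comb :: "op3 list \<Rightarrow> tterm" where
  "comb [] = Gen"
| "comb (c # a) = top c Gen (comb a)"

fun tab :: "op3 \<Rightarrow> op3 \<Rightarrow> op3 \<times> op3" where
  "tab OL o1 = (o1, OL)"
| "tab OR OL = (OR, OR)"
| "tab OR OR = (OR, OR)"
| "tab OR OM = (OR, OR)"
| "tab OM OL = (OM, OR)"
| "tab OM OR = (OR, OM)"
| "tab OM OM = (OM, OM)"

fun app :: "op3 \<Rightarrow> op3 list \<Rightarrow> op3 list \<Rightarrow> op3 list" where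
  "app p [] b = p # b"
| "app p (o1 # a) b = fst (tab p o1) # app (snd (tab p o1)) a b"

lemma cong_top: "tcong s s' \<Longrightarrow> tcong t t' \<Longrightarrow> tcong (top p s t) (top p s' t')"
  by (cases p) (auto intro: tcong.intros)

lemma tab_step: "tcong (top p (top o1 x w) v) (top (fst (tab p o1)) x (top (snd (tab p o1)) w v))"
  by (cases p; cases o1) (auto intro: tcong.intros)

lemma app_comb: "tcong (top p (comb a) (comb b)) (comb (app p a b))"
proof (induction a arbitrary: p)
  case Nil then show ?case by (simp add: tcong.refl)
next
  case (Cons o1 a)
  have "tcong (top p (comb (o1 # a)) (comb b))
     (top (fst (tab p o1)) Gen (top (snd (tab p o1)) (comb a) (comb b)))"
    using tab_step by simp
  moreover have "tcong (top (fst (tab p o1)) Gen (top (snd (tab p o1)) (comb a) (comb b)))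
     (top (fst (tab p o1)) Gen (comb (app (snd (tab p o1)) a b)))"
    by (rule cong_top[OF tcong.refl Cons.IH])
  ultimately show ?case by (auto intro: tcong.trans)
qed

fun flat :: "tterm \<Rightarrow> op3 list" where
  "flat Gen = []"
| "flat (TL s t) = app OL (flat s) (flat t)"
| "flat (TR s t) = app OR (flat s) (flat t)"
| "flat (TM s t) = app OM (flat s) (flat t)"

lemma flat_comb: "tcong t (comb (flat t))"
proof (induction t)
  case Gen then show ?case by (simp add: tcong.refl)
next
  case (TL s t)
  have "tcong (TL s t) (top OL (comb (flat s)) (comb (flat t)))"
    using TL by (simp add: tcong.congL)
  then show ?case using app_comb[of OL "flat s" "flat t"] by (auto intro: tcong.trans)
next
  case (TR s t)
  have "tcong (TR s t) (top OR (comb (flat s)) (comb (flat t)))"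
    using TR by (simp add: tcong.congR)
  then show ?case using app_comb[of OR "flat s" "flat t"] by (auto intro: tcong.trans)
next
  case (TM s t)
  have "tcong (TM s t) (top OM (comb (flat s)) (comb (flat t)))"
    using TM by (simp add: tcong.congM)
  then show ?case using app_comb[of OM "flat s" "flat t"] by (auto intro: tcong.trans)
qed

lemma TL_top: "tcong (TL x (top o1 y z)) (TL (TL x y) z)"
  by (cases o1) (auto intro: tcong.intros)

lemma TL_repl: "tcong (TL x (comb (o1 # a))) (TL x (comb (replicate (Suc (length a)) OL)))"
proof (induction a arbitrary: x o1)
  case Nil
  have "tcong (TL x (top o1 Gen Gen)) (TL (TL x Gen) Gen)" by (rule TL_top)
  moreover have "tcong (TL (TL x Gen) Gen) (TL x (TL Gen Gen))" by (rule tcong.ax1)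
  ultimately show ?case by (auto intro: tcong.trans)
next
  case (Cons o2 a)
  have "tcong (TL x (comb (o1 # o2 # a))) (TL (TL x Gen) (comb (o2 # a)))"
    using TL_top by simp
  moreover have "tcong (TL (TL x Gen) (comb (o2 # a)))
      (TL (TL x Gen) (comb (replicate (Suc (length a)) OL)))" by (rule Cons.IH)
  moreover have "tcong (TL (TL x Gen) (comb (replicate (Suc (length a)) OL)))
      (TL x (TL Gen (comb (replicate (Suc (length a)) OL))))" by (rule tcong.ax1)
  ultimately show ?case by (auto intro: tcong.trans)
qed

fun canon :: "op3 list \<Rightarrow> op3 list" where
  "canon [] = []"
| "canon (OL # a) = OL # replicate (length a) OL"
| "canon (o1 # a) = o1 # canon a"

lemma canon_comb: "tcong (comb a) (comb (canon a))"
proof (induction a rule: canon.induct)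
  case 1 then show ?case by (simp add: tcong.refl)
next
  case (2 a)
  show ?case
  proof (cases a)
    case Nil then show ?thesis by (simp add: tcong.refl)
  next
    case (Cons o2 b)
    then show ?thesis using TL_repl[of Gen o2 b] by simp
  qed
next
  case ("3_1" a) then show ?case by (simp add: tcong.congR tcong.refl)
next
  case ("3_2" a) then show ?case by (simp add: tcong.congM tcong.refl)
qed

fun sem :: "op3 list \<Rightarrow> nat set" where
  "sem [] = {0}"
| "sem (OL # a) = {0}"
| "sem (OR # a) = Suc ` sem a"
| "sem (OM # a) = insert 0 (Suc ` sem a)"

lemma sem_ne: "sem a \<noteq> {}"
  by (induction a rule: sem.induct) auto

lemma peval_comb: "peval (comb a) = (Suc (length a), sem a)"
proof (induction a)
  case Nil then show ?case by simp
next
  case (Cons o1 a)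
  then show ?case by (cases o1) (auto simp: pL_def pR_def pM_def image_iff)
qed

lemma peval_cong: "tcong s t \<Longrightarrow> peval s = peval t"
  by (induction rule: tcong.induct)
     (auto simp: pL_def pR_def pM_def image_Un image_image add.assoc)

inductive canonical :: "op3 list \<Rightarrow> bool" where
  "canonical []"
| "canonical (OL # replicate n OL)"
| "canonical a \<Longrightarrow> canonical (OR # a)"
| "canonical a \<Longrightarrow> canonical (OM # a)"

lemma canon_canonical: "canonical (canon a)"
  by (induction a rule: canon.induct) (auto intro: canonical.intros)

lemma length_canon: "length (canon a) = length a"
  by (induction a rule: canon.induct) auto

lemma sem_OM_pos: "\<exists>x. Suc x \<in> sem (OM # a)"
  using sem_ne[of a] by auto

lemma ins_suc: "insert (0::nat) (Suc ` A) = insert 0 (Suc ` B) \<Longrightarrow> A = B"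
proof -
  assume h: "insert (0::nat) (Suc ` A) = insert 0 (Suc ` B)"
  have "Suc ` A = insert 0 (Suc ` A) - {0}" by auto
  also have "\<dots> = insert 0 (Suc ` B) - {0}" using h by (rule arg_cong)
  also have "\<dots> = Suc ` B" by auto
  finally show ?thesis by (simp add: inj_image_eq_iff)
qed

lemma canonical_inj: "canonical a \<Longrightarrow> canonical b \<Longrightarrow> length a = length b \<Longrightarrow> sem a = sem b \<Longrightarrow> a = b"
proof (induction a arbitrary: b rule: canonical.induct)
  case 1 then show ?case by simp
next
  case (2 n)
  from 2(1) show ?case
  proof cases
    case 1 then show ?thesis using 2 by simp
  next
    case (2 m) then show ?thesis using "2.prems" by simp
  next
    case (3 c)
    have "0 \<in> sem b" using "2.prems" by (metis insertI1 sem.simps(2))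
    then show ?thesis using 3 by auto
  next
    case (4 c)
    obtain x where "Suc x \<in> sem b" using sem_OM_pos 4 by blast
    then show ?thesis using "2.prems" by (metis Zero_not_Suc sem.simps(2) singletonD)
  qed
next
  case (3 a)
  from 3(3) show ?case
  proof cases
    case 1 then show ?thesis using 3 by simp
  next
    case (2 m)
    have "0 \<in> sem (OR # a)" using "3.prems" 2 by simp
    then show ?thesis by auto
  next
    case (3 c) then show ?thesis using "3.prems" "3.IH"[of c] by (simp add: inj_image_eq_iff)
  next
    case (4 c)
    have "0 \<in> sem (OR # a)" using "3.prems" 4 by simp
    then show ?thesis by auto
  qed
next
  case (4 a)
  from 4(3) show ?case
  proof cases
    case 1 then show ?thesis using 4 by simp
  next
    case (2 m)
    obtain x where "Suc x \<in> sem (OM # a)" using sem_OM_pos by blast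
    then show ?thesis using "4.prems" 2 by (metis Zero_not_Suc sem.simps(2) singletonD)
  next
    case (3 c)
    have "0 \<in> sem b" using "4.prems"(3) by (metis insertI1 sem.simps(4))
    then show ?thesis using 3 by (simp add: image_iff)
  next
    case (4 c)
    have "insert 0 (Suc ` sem a) = insert 0 (Suc ` sem c)" using "4.prems"(3) 4 by simp
    then have "sem a = sem c" by (rule ins_suc)
    then show ?thesis using "4.prems" "4.IH"[of c] 4 by simp
  qed
qed

lemma peval_t: "peval t = peval (comb (canon (flat t)))"
  using flat_comb[of t] canon_comb[of "flat t"] peval_cong by (metis tcong.trans)

lemma inj_part: "peval s = peval t \<Longrightarrow> tcong s t"
proof -
  assume h: "peval s = peval t"
  have "comb (canon (flat s)) = comb (canon (flat t))"
  proof -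
    have "canon (flat s) = canon (flat t)"
      using h peval_t[of s] peval_t[of t] canon_canonical canonical_inj
      by (simp add: peval_comb)
    then show ?thesis by simp
  qed
  then show ?thesis using flat_comb canon_comb
    by (metis tcong.sym tcong.trans)
qed

lemma peval_shape: "fst (peval t) = tlen t \<and> snd (peval t) \<noteq> {} \<and> snd (peval t) \<subseteq> {0..<tlen t}"
  by (induction t) (auto simp: pL_def pR_def pM_def)

lemma tlen_pos: "tlen t \<ge> 1"
  by (induction t) auto

lemma sem_sub: "sem a \<subseteq> {0..<Suc (length a)}"
  by (induction a rule: sem.induct) auto

lemma surj_sem: "S \<noteq> {} \<Longrightarrow> S \<subseteq> {0..<Suc m} \<Longrightarrow> \<exists>a. length a = m \<and> sem a = S"
proof (induction m arbitrary: S)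
  case 0
  then have "S = {0}" by auto
  then show ?case by (intro exI[of _ "[]"]) simp
next
  case (Suc m)
  define S' where "S' = {k. Suc k \<in> S}"
  have sub: "S' \<subseteq> {0..<Suc m}" using Suc.prems(2) by (auto simp: S'_def)
  show ?case
  proof (cases "S' = {}")
    case True
    then have "S = {0}" using Suc.prems by (auto simp: S'_def) (metis not0_implies_Suc)+
    then show ?thesis by (intro exI[of _ "OL # replicate m OL"]) simp
  next
    case False
    then obtain a where a: "length a = m" "sem a = S'" using Suc.IH sub by blast
    have eq: "S = Suc ` S' \<union> (S \<inter> {0})"
      by (auto simp: S'_def image_iff) (metis not0_implies_Suc)
    show ?thesis
    proof (cases "0 \<in> S")
      case True
      then show ?thesis using a eq by (intro exI[of _ "OM # a"]) auto
    next
      case False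
      then show ?thesis using a eq by (intro exI[of _ "OR # a"]) auto
    qed
  qed
qed

lemma image_len: "n \<ge> 1 \<Longrightarrow> peval ` {t. tlen t = n} = Pn n"
proof
  assume "n \<ge> 1"
  show "peval ` {t. tlen t = n} \<subseteq> Pn n"
    using peval_shape by (auto simp: Pn_def) (metis prod.collapse)
next
  assume n: "n \<ge> 1"
  show "Pn n \<subseteq> peval ` {t. tlen t = n}"
  proof
    fix x assume "x \<in> Pn n"
    then obtain S where x: "x = (n, S)" "S \<noteq> {}" "S \<subseteq> {0..<n}" by (auto simp: Pn_def)
    obtain m where m: "n = Suc m" using n by (cases n) auto
    obtain a where a: "length a = m" "sem a = S" using surj_sem x m by blast
    have "peval (comb a) = x" using a x m by (simp add: peval_comb)
    moreover have "tlen (comb a) = n" using peval_shape[of "comb a"] a m by (simp add: peval_comb)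
    ultimately show "x \<in> peval ` {t. tlen t = n}" by blast
  qed
qed

lemma trioid: "is_trioid Pset pL pR pM"
  unfolding is_trioid_def Pset_def Pn_def
  by (auto simp: pL_def pR_def pM_def image_Un image_image add.assoc)

theorem proposition1p9:
  shows "is_trioid Pset pL pR pM
    \<and> (\<forall>s t. tcong s t \<longrightarrow> peval s = peval t)
    \<and> (\<forall>s t. peval s = peval t \<longrightarrow> tcong s t)
    \<and> peval ` UNIV = Pset
    \<and> (\<forall>n\<ge>1. peval ` {t. tlen t = n} = Pn n)"
proof -
  have "peval ` UNIV = Pset"
  proof -
    have "peval ` UNIV = (\<Union>n\<in>{1..}. peval ` {t. tlen t = n})"
      using tlen_pos by auto
    also have "\<dots> = Pset" using image_len by (simp add: Pset_def)
    finally show ?thesis .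
  qed
  then show ?thesis using trioid peval_cong inj_part image_len by blast
qed

end
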